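(* The class $\mathcal{S}^*_{car}$ satisfies the following: (i) $\mathcal{S}^*_{car}\subset\mathcal{S}^*(\alpha)$ for $0\le\alpha\le 1/4$; (ii) $\mathcal{S}^*_{car}\subset\mathcal{SS}^*(\beta)$ for $\beta_0\le\beta\le 1$, where $\beta_0=(2/\pi)\tan^{-1}(3\sqrt{3/5})$; (iii) $k\text{-}\mathcal{S}^*\subset\mathcal{S}^*_{car}$ for $k\ge 5/3$; (iv) $\mathcal{S}^*_e(\alpha)\subset\mathcal{S}^*_{car}$ for $\alpha_0\le\alpha<1$, where $\alpha_0=(e-2)/(2(e-1))$; (v) $\mathcal{S}^*_L(\alpha)\subset\mathcal{S}^*_{car}$ for $1/2\le\alpha<1$; (vi) $\mathcal{S}^*(\sqrt{1+cz})\subset\mathcal{S}^*_{car}$ for $0<c\le 3/4$; (vii) $\mathcal{S}^*[A,B]\subset\mathcal{S}^*_{car}$, where $-1<B<A\le 1$, if one of the following holds: (a) $1-B^2<2(1-AB)\le 3(1-B^2)$ and $2A\le 1+B$; (b) $3(1-B^2)\le 2(1-AB)<5(1-B^2)$ and $2A\le 3+5B$; (viii) $\mathcal{S}^*_{car}\subset\mathcal{S}^*[1,-(M-1)/M]$ for $M\ge(3+\sqrt5)/4$.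
   Context: $\mathbb{D}=\{z:|z|<1\}$; $\mathcal{A}$ is the class of analytic $f$ on $\mathbb{D}$ with $f(0)=0$, $f'(0)=1$. $F\prec G$ means $F=G\circ w$ for an analytic $w:\mathbb{D}\to\mathbb{D}$ with $w(0)=0$. For an analytic $\varphi$ on $\mathbb{D}$, $\mathcal{S}^*(\varphi)$ denotes the class of $f\in\mathcal{A}$ with $zf'(z)/f(z)\prec\varphi(z)$ in $\mathbb{D}$. Square roots and powers are principal branches. Classes: $\mathcal{S}^*_{car}=\mathcal{S}^*(1+z+z^2/2)$; $\mathcal{S}^*(\alpha)$ is the class of $f\in\mathcal{A}$ with $\operatorname{Re}(zf'(z)/f(z))>\alpha$ on $\mathbb{D}$; $\mathcal{SS}^*(\beta)=\mathcal{S}^*(((1+z)/(1-z))^\beta)$, i.e. $f\in\mathcal{A}$ with $|\arg(zf'(z)/f(z))|<\beta\pi/2$; for $k\ge0$, $k\text{-}\mathcal{S}^*$ is the class of $f\in\mathcal{A}$ with $\operatorname{Re}(zf'(z)/f(z))>k|zf'(z)/f(z)-1|$ on $\mathbb{D}$; $\mathcal{S}^*_e(\alpha)=\mathcal{S}^*(\alpha+(1-\alpha)e^z)$ and $\mathcal{S}^*_L(\alpha)=\mathcal{S}^*(\alpha+(1-\alpha)\sqrt{1+z})$ for $0\le\alpha<1$; $\mathcal{S}^*(\sqrt{1+cz})$ for $0<c\le1$; for $-1\le B<A\le1$, $\mathcal{S}^*[A,B]=\mathcal{S}^*((1+Az)/(1+Bz))$. *)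

theory Defs
  imports "HOL-Analysis.Analysis"
begin

definition classA :: "(complex \<Rightarrow> complex) set" where
  "classA = {f. f holomorphic_on ball 0 1 \<and> f 0 = 0 \<and> deriv f 0 = 1}"

definition subord :: "(complex \<Rightarrow> complex) \<Rightarrow> (complex \<Rightarrow> complex) \<Rightarrow> bool" where
  "subord F G \<longleftrightarrow> (\<exists>w. w holomorphic_on ball 0 1 \<and> w ` ball 0 1 \<subseteq> ball 0 1 \<and> w 0 = 0 \<and>
      (\<forall>z\<in>ball 0 1. F z = G (w z)))"

text \<open>The function z f'(z)/f(z), with its removable value 1 at the origin.\<close>
definition zdlog :: "(complex \<Rightarrow> complex) \<Rightarrow> complex \<Rightarrow> complex" where
  "zdlog f z = (if z = 0 then 1 else z * deriv f z / f z)"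

text \<open>\<open>S*(phi)\<close>: f in A, f nonvanishing on the punctured disk (so that zf'/f is analytic),
  and zf'/f subordinate to phi.\<close>
definition Sstar :: "(complex \<Rightarrow> complex) \<Rightarrow> (complex \<Rightarrow> complex) set" where
  "Sstar \<phi> = {f. f \<in> classA \<and> (\<forall>z\<in>ball 0 1 - {0}. f z \<noteq> 0) \<and> subord (zdlog f) \<phi>}"

definition Scar :: "(complex \<Rightarrow> complex) set" where
  "Scar = Sstar (\<lambda>z. 1 + z + z^2 / 2)"

definition Sstar_ord :: "real \<Rightarrow> (complex \<Rightarrow> complex) set" where
  "Sstar_ord \<alpha> = {f. f \<in> classA \<and> (\<forall>z\<in>ball 0 1 - {0}. f z \<noteq> 0) \<and>
      (\<forall>z\<in>ball 0 1. Re (zdlog f z) > \<alpha>)}"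

definition SSstar :: "real \<Rightarrow> (complex \<Rightarrow> complex) set" where
  "SSstar \<beta> = Sstar (\<lambda>z. ((1 + z) / (1 - z)) powr (complex_of_real \<beta>))"

definition kSstar :: "real \<Rightarrow> (complex \<Rightarrow> complex) set" where
  "kSstar k = {f. f \<in> classA \<and> (\<forall>z\<in>ball 0 1 - {0}. f z \<noteq> 0) \<and>
      (\<forall>z\<in>ball 0 1. Re (zdlog f z) > k * cmod (zdlog f z - 1))}"

definition Sstar_e :: "real \<Rightarrow> (complex \<Rightarrow> complex) set" where
  "Sstar_e \<alpha> = Sstar (\<lambda>z. of_real \<alpha> + (1 - of_real \<alpha>) * exp z)"

definition Sstar_L :: "real \<Rightarrow> (complex \<Rightarrow> complex) set" where
  "Sstar_L \<alpha> = Sstar (\<lambda>z. of_real \<alpha> + (1 - of_real \<alpha>) * csqrt (1 + z))"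

definition Sstar_sqrt :: "real \<Rightarrow> (complex \<Rightarrow> complex) set" where
  "Sstar_sqrt c = Sstar (\<lambda>z. csqrt (1 + of_real c * z))"

definition Sstar_AB :: "real \<Rightarrow> real \<Rightarrow> (complex \<Rightarrow> complex) set" where
  "Sstar_AB A B = Sstar (\<lambda>z. (1 + of_real A * z) / (1 + of_real B * z))"

end

theory Submission imports Defs "HOL-Complex_Analysis.Complex_Analysis" begin


lemma zdlog_holo:
  assumes "f \<in> classA" "\<forall>z\<in>ball 0 1 - {0}. f z \<noteq> 0"
  shows "zdlog f holomorphic_on ball 0 1"
proof -
  have hf: "f holomorphic_on ball 0 1" "f 0 = 0" "deriv f 0 = 1" using assms unfolding classA_def by auto
  define g where "g = (\<lambda>z. if z = 0 then deriv f 0 else (f z - f 0) / (z - 0))"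
  have gh: "g holomorphic_on ball 0 1" unfolding g_def by (rule pole_lemma_open) (auto simp: hf)
  have dh: "deriv f holomorphic_on ball 0 1" using holomorphic_deriv[OF hf(1)] by auto
  have gnz: "\<forall>z\<in>ball 0 1. g z \<noteq> 0" using assms(2) hf by (auto simp: g_def)
  have h1: "(\<lambda>z. deriv f z / g z) holomorphic_on ball 0 1" by (intro holomorphic_intros dh gh) (use gnz in auto)
  have h2: "\<And>z. z \<in> ball 0 1 \<Longrightarrow> deriv f z / g z = zdlog f z" using hf by (auto simp: zdlog_def g_def)
  show ?thesis by (rule holomorphic_transform[OF h1 h2])
qed

definition crit :: "complex \<Rightarrow> bool" where "crit v \<longleftrightarrow> (cmod (v - 1))^2 < 1 + 2 * cmod v"

lemma crit_csqrt:
  assumes "crit v"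
  shows "cmod (csqrt v - 1) < 1" "v \<notin> \<real>\<^sub>\<le>\<^sub>0"
proof -
  define t where "t = csqrt v"
  define a where "a = Re t"
  define b where "b = Im t"
  have a0: "a \<ge> 0" unfolding a_def t_def by (rule Re_csqrt)
  have vt: "v = t^2" unfolding t_def by simp
  have e1: "(cmod (v - 1))^2 = (a^2 - b^2 - 1)^2 + (2*a*b)^2"
    unfolding vt cmod_power2 a_def b_def by (simp add: power2_eq_square algebra_simps)
  have e2: "cmod v = a^2 + b^2"
    unfolding vt norm_power cmod_power2 a_def b_def by simp
  have "(a^2 + b^2)^2 < (2*a)^2"
    using assms unfolding crit_def e1 e2 by (simp add: power2_eq_square algebra_simps)
  then have lt: "a^2 + b^2 < 2*a"
    using a0 by (smt (verit) power_mono zero_le_power2 add_nonneg_nonneg)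
  have "(cmod (t - 1))^2 = (a - 1)^2 + b^2"
    unfolding cmod_power2 a_def b_def by simp
  also have "\<dots> < 1" using lt by (simp add: power2_eq_square algebra_simps)
  finally show "cmod (csqrt v - 1) < 1" unfolding t_def
    by (smt (verit) power_less_one_iff norm_ge_zero one_power2 power2_less_imp_less zero_le_one)
  show "v \<notin> \<real>\<^sub>\<le>\<^sub>0"
  proof
    assume "v \<in> \<real>\<^sub>\<le>\<^sub>0"
    then obtain r where r: "r \<le> 0" "v = of_real r" by (auto elim!: nonpos_Reals_cases)
    have "(cmod (v - 1))^2 = (1 - r)^2" using r unfolding cmod_power2 by (simp add: power2_eq_square algebra_simps)
    moreover have "cmod v = - r" using r by simp
    ultimately have "(cmod (v - 1))^2 = (1 - r)^2" "cmod v = - r" by auto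
    then show False using assms unfolding crit_def by (simp add: power2_eq_square algebra_simps)
  qed
qed



lemma subord_phi:
  assumes hp: "p holomorphic_on ball 0 1" and p0: "p 0 = 1" and cr: "\<forall>z\<in>ball 0 1. crit (2 * p z - 1)"
  shows "subord p (\<lambda>z. 1 + z + z^2/2)"
  unfolding subord_def
proof (intro exI[of _ "\<lambda>z. csqrt (2 * p z - 1) - 1"] conjI ballI)
  show "(\<lambda>z. csqrt (2 * p z - 1) - 1) holomorphic_on ball 0 1"
    using cr crit_csqrt(2) by (intro holomorphic_intros hp) auto
  show "(\<lambda>z. csqrt (2 * p z - 1) - 1) ` ball 0 1 \<subseteq> ball 0 1"
    using cr crit_csqrt(1) by (auto simp: dist_norm norm_minus_commute)
  show "csqrt (2 * p 0 - 1) - 1 = 0" using p0 by simp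
  fix z :: complex assume "z \<in> ball 0 1"
  define s where "s = csqrt (2 * p z - 1)"
  have hs: "s^2 = 2 * p z - 1" unfolding s_def by simp
  have "1 + (s - 1) + (s - 1)^2/2 = (s^2 + 1)/2" by (simp add: power2_eq_square field_simps)
  also have "\<dots> = p z" using hs by simp
  finally show "p z = 1 + (csqrt (2 * p z - 1) - 1) + (csqrt (2 * p z - 1) - 1)^2/2"
    unfolding s_def by simp
qed

lemma Scar_intro:
  assumes "f \<in> classA" "\<forall>z\<in>ball 0 1 - {0}. f z \<noteq> 0" "\<forall>z\<in>ball 0 1. crit (2 * zdlog f z - 1)"
  shows "f \<in> Scar"
  unfolding Scar_def Sstar_def using assms zdlog_holo subord_phi[of "zdlog f"] by (auto simp: zdlog_def)

lemma Sstar_image: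
  assumes "f \<in> Sstar \<psi>" "z \<in> ball 0 1"
  shows "\<exists>\<zeta>\<in>ball 0 1. zdlog f z = \<psi> \<zeta>"
  using assms unfolding Sstar_def subord_def by blast

lemma Sstar_basic:
  assumes "f \<in> Sstar \<psi>"
  shows "f \<in> classA" "\<forall>z\<in>ball 0 1 - {0}. f z \<noteq> 0"
  using assms unfolding Sstar_def by auto

lemma disk_crit:
  assumes "cmod (u - 3/2) < 1"
  shows "crit (2*u - 1)"
proof -
  define v where "v = 2*u - 1"
  have "cmod (v - 2) = 2 * cmod (u - 3/2)"
  proof -
    have eq: "v - 2 = 2 * (u - 3/2)" unfolding v_def by simp
    show ?thesis unfolding eq norm_mult by simp
  qed
  then have "cmod (v - 2) < 2" using assms by simp
  then have "(cmod (v - 2))^2 < 2^2" by (intro power_strict_mono) auto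
  then have h: "(Re v - 2)^2 + (Im v)^2 < 4" unfolding cmod_power2 by simp
  have "(cmod (v - 1))^2 = (Re v - 1)^2 + (Im v)^2" unfolding cmod_power2 by simp
  also have "\<dots> < 1 + 2 * Re v" using h by (simp add: power2_eq_square algebra_simps)
  also have "\<dots> \<le> 1 + 2 * cmod v" using complex_Re_le_cmod[of v] by simp
  finally show ?thesis unfolding crit_def v_def .
qed

lemma star_poly:
  fixes P \<rho> X :: real
  assumes "1 \<le> P" "P \<le> \<rho>" "\<rho>^4 - 6*\<rho>^2 - 3 < 8*X"
  shows "P^4 - 6*P^2 - 3 < 8*(P/\<rho>)*X"
proof -
  have r0: "\<rho> > 0" using assms by linarith
  have id: "P*(\<rho>^4-6*\<rho>^2-3) - \<rho>*(P^4-6*P^2-3) = (\<rho> - P)*(P*\<rho>*(\<rho>^2+\<rho>*P+P^2) - 6*P*\<rho> + 3)"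
    by (simp add: algebra_simps power2_eq_square power4_eq_xxxx)
  have "\<rho>^2 + P^2 \<ge> 2*\<rho>*P" using sum_squares_bound[of \<rho> P] by (simp add: power2_eq_square algebra_simps)
  then have "\<rho>^2+\<rho>*P+P^2 \<ge> 3*(\<rho>*P)" by linarith
  then have "P*\<rho>*(\<rho>^2+\<rho>*P+P^2) \<ge> P*\<rho>*(3*(\<rho>*P))"
    using r0 assms by (intro mult_left_mono) auto
  then have "P*\<rho>*(\<rho>^2+\<rho>*P+P^2) - 6*P*\<rho> + 3 \<ge> 3*(P*\<rho> - 1)^2"
    by (simp add: power2_eq_square algebra_simps)
  then have "P*\<rho>*(\<rho>^2+\<rho>*P+P^2) - 6*P*\<rho> + 3 \<ge> 0" by (smt (verit) zero_le_power2)
  then have "P*(\<rho>^4-6*\<rho>^2-3) - \<rho>*(P^4-6*P^2-3) \<ge> 0" unfolding id using assms by simp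
  moreover have "P*(\<rho>^4-6*\<rho>^2-3) < P*(8*X)" using assms by (intro mult_strict_left_mono) auto
  ultimately have "(P^4-6*P^2-3)*\<rho> < 8*P*X" using r0 by (simp add: algebra_simps)
  then have "P^4-6*P^2-3 < (8*P*X)/\<rho>" using r0 by (simp add: pos_less_divide_eq)
  then show ?thesis by simp
qed

lemma crit_star:
  assumes cv: "crit v" and l0: "0 < l" and l1: "l \<le> 1"
  shows "crit (1 + of_real l * (v - 1))"
proof -
  define d where "d = v - 1"
  define \<rho> where "\<rho> = cmod d"
  define X where "X = Re d"
  have nd: "(cmod d)^2 = (Re d)^2 + (Im d)^2" by (simp add: cmod_power2)
  have vd: "v = 1 + d" using d_def by simp
  have nv: "(cmod v)^2 = 1 + 2*X + \<rho>^2"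
    unfolding vd cmod_power2 X_def \<rho>_def nd by (simp add: cmod_power2 power2_eq_square algebra_simps)
  have nl: "(cmod (1 + of_real l * d))^2 = 1 + 2*l*X + (l*\<rho>)^2"
    unfolding power_mult_distrib \<rho>_def X_def cmod_power2 by (simp add: power2_eq_square algebra_simps)
  have nl2: "cmod (of_real l * d) = l * \<rho>" unfolding \<rho>_def using l0 by (simp add: norm_mult)
  show ?thesis
  proof (cases "l * \<rho> < 1")
    case True
    have "0 \<le> l * \<rho>" using l0 \<rho>_def by simp
    then have "(l*\<rho>)^2 < 1" using True by (simp add: abs_square_less_1)
    then show ?thesis unfolding crit_def d_def[symmetric] using nl2
      by (simp add: d_def) (smt (verit) norm_ge_zero)
  next
    case False
    then have P1: "1 \<le> l * \<rho>" by simp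
    have Pr: "l * \<rho> \<le> \<rho>" using l0 l1 norm_ge_zero[of d] unfolding \<rho>_def by (intro mult_left_le_one_le) auto
    have "\<rho>^2 - 1 < 2 * cmod v" using cv unfolding crit_def \<rho>_def d_def by simp
    moreover have "\<rho>^2 - 1 \<ge> 0" using P1 Pr by (simp add: one_le_power)
    ultimately have "(\<rho>^2 - 1)^2 < (2 * cmod v)^2" by (intro power_strict_mono) auto
    then have "(\<rho>^2 - 1)^2 < 4 * (1 + 2*X + \<rho>^2)" using nv by (simp add: power_mult_distrib)
    then have "\<rho>^4 - 6*\<rho>^2 - 3 < 8*X" by (simp add: power2_eq_square power4_eq_xxxx algebra_simps)
    from star_poly[OF P1 Pr this]
    have "(l*\<rho>)^4 - 6*(l*\<rho>)^2 - 3 < 8*l*X"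
      using P1 by (cases "\<rho> = 0") (auto simp: field_simps)
    then have "((l*\<rho>)^2 - 1)^2 < 4 * (1 + 2*l*X + (l*\<rho>)^2)"
      by (simp add: power2_eq_square power4_eq_xxxx algebra_simps)
    then have "((l*\<rho>)^2 - 1)^2 < (2 * cmod (1 + of_real l * d))^2"
      using nl by (simp add: power_mult_distrib)
    moreover have "(l*\<rho>)^2 - 1 \<ge> 0" using P1 by (simp add: one_le_power)
    ultimately have "(l*\<rho>)^2 - 1 < 2 * cmod (1 + of_real l * d)"
      by (smt (verit) power_mono norm_ge_zero)
    then show ?thesis unfolding crit_def using nl2 by (simp add: d_def)
  qed
qed



lemma cos_lb: "1 - y^2/2 \<le> cos (y::real)"
proof -
  have "cos y = cos (2 * (y/2))" by simp
  also have "\<dots> = 1 - 2 * sin (y/2) ^ 2" by (rule cos_double_sin)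
  finally have c: "cos y = 1 - 2 * sin (y/2) ^ 2" .
  have "\<bar>sin (y/2)\<bar> \<le> \<bar>y/2\<bar>" by (rule abs_sin_x_le_abs_x)
  then have "sin (y/2) ^ 2 \<le> (y/2)^2" by (simp only: abs_le_square_iff)
  then show ?thesis unfolding c by (simp add: power_divide)
qed

lemma e_bounds: "1 < exp (1::real)" "exp (1::real) < 3"
proof -
  show "1 < exp (1::real)" by simp
  show "exp (1::real) < 3" using e_less_272 by linarith
qed



lemma n_nonpos:
  fixes \<sigma> :: real
  assumes "0 \<le> \<sigma>" "\<sigma> \<le> 2"
  shows "(exp \<sigma> - 1) * (exp \<sigma> - 4 * exp 1 + 3) + exp 1 * exp \<sigma> * (2*\<sigma> - \<sigma>^2) \<le> 0"
proof -
  define e where "e = exp (1::real)"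
  define K where "K = 4 * e - 3"
  have e1: "1 < e" "e < 3" using e_bounds unfolding e_def by auto
  define nf :: "real \<Rightarrow> real" where "nf = (\<lambda>x. exp x + K * exp (-x) - (4*e - 2) + e * (2*x - x^2))"
  define nf1 :: "real \<Rightarrow> real" where "nf1 = (\<lambda>x. exp x - K * exp (-x) + e * (2 - 2*x))"
  define nf2 :: "real \<Rightarrow> real" where "nf2 = (\<lambda>x. exp x + K * exp (-x) - 2*e)"
  have d1: "DERIV nf s :> nf1 s" for s
    unfolding nf_def nf1_def by (rule derivative_eq_intros refl | simp)+
  have d2: "DERIV nf1 s :> nf2 s" for s
    unfolding nf1_def nf2_def by (rule derivative_eq_intros refl | simp)+
  have pos2: "nf2 s \<ge> 0" for s
  proof -
    define R where "R = exp s"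
    have R0: "R > 0" unfolding R_def by simp
    have em: "exp (-s) = 1 / R" unfolding R_def by (simp add: exp_minus field_simps)
    have "K - e^2 = (e-1)*(3-e)" unfolding K_def by (simp add: power2_eq_square algebra_simps)
    moreover have "(e-1)*(3-e) \<ge> 0" using e1 by simp
    ultimately have "(R - e)^2 + (K - e^2) \<ge> 0" by simp
    then have "R * R + K - 2 * e * R \<ge> 0" by (simp add: power2_eq_square algebra_simps)
    then have "(R * R + K - 2 * e * R) / R \<ge> 0" using R0 by simp
    moreover have "(R * R + K - 2 * e * R) / R = nf2 s"
      unfolding nf2_def em R_def[symmetric] using R0 by (simp add: field_simps)
    ultimately show ?thesis by simp
  qed
  have cvx: "convex_on {0..2} nf"
    by (rule f''_ge0_imp_convex[OF convex_real_interval(5) d1 d2 pos2])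
  have n0: "nf 0 = 0" unfolding nf_def K_def by simp
  have n2: "nf 2 < 0"
  proof -
    have ee: "exp (2::real) = e^2"
    proof -
      have "exp (2::real) = exp (1 + 1)" by simp
      also have "\<dots> = exp 1 * exp 1" by (rule exp_add)
      finally show ?thesis unfolding e_def power2_eq_square .
    qed
    have em: "exp (-2::real) = 1 / e^2" unfolding exp_minus ee by (simp add: field_simps)
    have "(e^2 - 1) * ((e - 1) * (e - 3)) < 0"
      using e1 by (intro mult_pos_neg) (auto simp: mult_pos_neg one_less_power)
    then have "e^2 * e^2 + K - 4 * e * e^2 + 2 * e^2 < 0" unfolding K_def
      by (simp add: power2_eq_square algebra_simps)
    then have "(e^2 * e^2 + K - 4 * e * e^2 + 2 * e^2) / e^2 < 0" using e1 by (simp add: divide_neg_pos)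
    moreover have "nf 2 = e^2 + K * (1 / e^2) - (4*e - 2)" unfolding nf_def using em ee by simp
    moreover have "(e^2 * e^2 + K - 4 * e * e^2 + 2 * e^2) / e^2 = e^2 + K * (1 / e^2) - (4*e - 2)"
      using e1 by (simp add: field_simps)
    ultimately show ?thesis by linarith
  qed
  have "nf ((1 - \<sigma>/2) *\<^sub>R 0 + (\<sigma>/2) *\<^sub>R 2) \<le> (1 - \<sigma>/2) * nf 0 + (\<sigma>/2) * nf 2"
    using assms by (intro convex_onD_Icc[OF cvx]) auto
  then have "nf \<sigma> \<le> (\<sigma>/2) * nf 2" using n0 by simp
  also have "\<dots> \<le> 0" using assms n2 by (simp add: mult_nonneg_nonpos)
  finally have nn: "nf \<sigma> \<le> 0" .
  define R where "R = exp \<sigma>"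
  have R0: "R > 0" unfolding R_def by simp
  have em: "exp (-\<sigma>) = 1 / R" unfolding R_def by (simp add: exp_minus field_simps)
  have "(R - 1) * (R - 4 * e + 3) + e * R * (2*\<sigma> - \<sigma>^2) = R * nf \<sigma>"
    unfolding nf_def em K_def R_def[symmetric] using R0 by (simp add: field_simps power2_eq_square)
  also have "\<dots> \<le> 0" using R0 nn by (simp add: mult_nonneg_nonpos)
  finally show ?thesis unfolding R_def e_def .
qed




lemma exp_real_core:
  fixes R c q \<sigma> y e :: real
  assumes e1: "1 < e" and R1: "1 \<le> R"
    and q0: "0 \<le> q" and qq: "q^2 = R^2 - 2*R*c + 1" and c1: "c \<le> 1"
    and clb: "1 - y^2/2 \<le> c" and yb: "y^2 < 2*\<sigma> - \<sigma>^2"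
    and N: "(R - 1) * (R - 4 * e + 3) + e * R * (2*\<sigma> - \<sigma>^2) \<le> 0"
  shows "R^2 - 2*e*R*c + e^2 < (e-1)^2 + 2*(e-1)*q"
proof -
  have "R * c \<le> R" using c1 R1 by (intro mult_left_le) auto
  then have "q^2 \<ge> (R-1)^2" using qq by (simp add: power2_eq_square algebra_simps)
  then have qR: "q \<ge> R - 1"
  proof (rule contrapos_pp)
    assume "\<not> R - 1 \<le> q"
    then have "q^2 < (R-1)^2" using q0 by (intro power_strict_mono) auto
    then show "\<not> (R-1)^2 \<le> q^2" by simp
  qed
  have "R * (2*c) \<ge> R * (2 - y^2)" using clb R1 by (intro mult_left_mono) auto
  moreover have "R * y^2 < R * (2*\<sigma> - \<sigma>^2)" using yb R1 by (intro mult_strict_left_mono) auto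
  ultimately have q2: "q^2 < (R-1)^2 + R*(2*\<sigma> - \<sigma>^2)" using qq by (simp add: power2_eq_square algebra_simps)
  have "e * q^2 < e * ((R-1)^2 + R*(2*\<sigma> - \<sigma>^2))" using e1 q2 by (intro mult_strict_left_mono) auto
  also have "\<dots> \<le> (e-1)*(R-1)*(R+3)" using N by (simp add: power2_eq_square algebra_simps)
  also have "\<dots> \<le> (e-1)*(R^2 - 1) + 2*(e-1)*q"
  proof -
    have "(e-1)*(R-1)*(R+3) = (e-1)*(R^2 - 1) + 2*(e-1)*(R-1)" by (simp add: power2_eq_square algebra_simps)
    moreover have "2*(e-1)*(R-1) \<le> 2*(e-1)*q" using qR e1 by (intro mult_left_mono) auto
    ultimately show ?thesis by simp
  qed
  finally have key: "e * q^2 < (e-1)*(R^2 - 1) + 2*(e-1)*q" .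
  have h: "2*(R*c) = R^2 + 1 - q^2" using qq by simp
  have "2*e*R*c = e*(2*(R*c))" by simp
  also have "\<dots> = e*(R^2 + 1 - q^2)" by (simp only: h)
  also have "\<dots> = e*R^2 + e - e*q^2" by (simp add: algebra_simps)
  finally have eq1: "2*e*R*c = e*R^2 + e - e*q^2" .
  have k1: "(e-1)*(R^2 - 1) = e*R^2 - e - R^2 + 1" by (simp add: algebra_simps)
  have k3: "2*(e-1)*q = 2*e*q - 2*q" by (simp add: algebra_simps)
  have k2: "e*q^2 < e*R^2 - e - R^2 + 1 + 2*e*q - 2*q" using key k1 k3 by linarith
  have k4: "(e-1)^2 = e^2 - 2*e + 1" by (simp add: power2_eq_square algebra_simps)
  show ?thesis using eq1 k2 k3 k4 by linarith
qed



lemma exp_crit0: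
  fixes \<zeta> :: complex
  assumes z1: "cmod \<zeta> < 1"
  shows "crit ((of_real (exp 1) * exp \<zeta> - 1) / of_real (exp 1 - 1))"
proof -
  define e where "e = exp (1::real)"
  have e1: "1 < e" "e < 3" using e_bounds by (auto simp: e_def)
  define x where "x = Re \<zeta>"
  define y where "y = Im \<zeta>"
  have "(cmod \<zeta>)^2 < 1" using z1 by (simp add: abs_square_less_1)
  then have xy: "x^2 + y^2 < 1" unfolding cmod_power2 x_def y_def .
  then have "x^2 < 1" by (smt (verit) zero_le_power2)
  then have x1: "-1 < x" "x < 1" by (auto simp: abs_square_less_1 abs_less_iff)
  define \<sigma> where "\<sigma> = x + 1"
  define R where "R = exp \<sigma>"
  have R1: "1 \<le> R" unfolding R_def \<sigma>_def using x1 by simp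
  define E where "E = of_real e * exp \<zeta>"
  have Rx: "R = e * exp x" unfolding R_def \<sigma>_def e_def by (simp add: exp_add)
  have ReE: "Re E = R * cos y" unfolding E_def Rx x_def y_def by (simp add: Re_exp)
  have ImE: "Im E = R * sin y" unfolding E_def Rx x_def y_def by (simp add: Im_exp)
  have sc: "(sin y)^2 + (cos y)^2 = 1" by simp
  define q where "q = cmod (E - 1)"
  have "q^2 = (R * cos y - 1)^2 + (R * sin y)^2" unfolding q_def cmod_power2 using ReE ImE by simp
  also have "\<dots> = R^2 * ((sin y)^2 + (cos y)^2) - 2*R*cos y + 1" by (simp add: power2_eq_square algebra_simps del: sin_cos_squared_add sin_cos_squared_add2 sin_cos_squared_add3)
  finally have qq0: "q^2 = R^2 * ((sin y)^2 + (cos y)^2) - 2*R*cos y + 1" .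
  have qq: "q^2 = R^2 - 2*R*cos y + 1" using qq0 by (simp only: sc mult_1_right)
  have "(cmod (E - of_real e))^2 = (R * cos y - e)^2 + (R * sin y)^2" unfolding cmod_power2 using ReE ImE by simp
  also have "\<dots> = R^2 * ((sin y)^2 + (cos y)^2) - 2*e*R*cos y + e^2" by (simp add: power2_eq_square algebra_simps del: sin_cos_squared_add sin_cos_squared_add2 sin_cos_squared_add3)
  finally have Ee0: "(cmod (E - of_real e))^2 = R^2 * ((sin y)^2 + (cos y)^2) - 2*e*R*cos y + e^2" .
  have Ee: "(cmod (E - of_real e))^2 = R^2 - 2*e*R*cos y + e^2" using Ee0 by (simp only: sc mult_1_right)
  have yb: "y^2 < 2*\<sigma> - \<sigma>^2" using xy unfolding \<sigma>_def by (simp add: power2_eq_square algebra_simps)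
  have N: "(R - 1) * (R - 4 * e + 3) + e * R * (2*\<sigma> - \<sigma>^2) \<le> 0"
    unfolding R_def e_def using x1 by (intro n_nonpos) (auto simp: \<sigma>_def)
  have core: "R^2 - 2*e*R*cos y + e^2 < (e-1)^2 + 2*(e-1)*q"
    by (rule exp_real_core[OF e1(1) R1 _ qq _ cos_lb yb N]) (auto simp: q_def)
  define k where "k = e - 1"
  have k0: "k > 0" using e1 by (simp add: k_def)
  have ck: "(of_real k :: complex) \<noteq> 0" using k0 by simp
  define v where "v = (E - 1) / of_real k"
  have v1: "v - 1 = (E - of_real e) / of_real k" unfolding v_def k_def using ck k_def
    by (simp add: field_simps)
  have nv1: "(cmod (v - 1))^2 = (cmod (E - of_real e))^2 / k^2"
    unfolding v1 norm_divide using k0 by (simp add: power_divide)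
  have nv: "cmod v = q / k" unfolding v_def norm_divide q_def using k0 by simp
  have "(cmod (E - of_real e))^2 < k^2 + 2*k*q" using core Ee unfolding k_def by simp
  then have "(cmod (E - of_real e))^2 / k^2 < (k^2 + 2*k*q) / k^2"
    using k0 by (intro divide_strict_right_mono) auto
  also have "(k^2 + 2*k*q) / k^2 = 1 + 2 * (q / k)" using k0 by (simp add: field_simps power2_eq_square)
  finally have "(cmod (v - 1))^2 < 1 + 2 * cmod v" unfolding nv1 nv .
  then show ?thesis unfolding crit_def v_def E_def k_def e_def .
qed

lemma exp_crit:
  fixes \<zeta> :: complex and \<alpha> :: real
  assumes z1: "cmod \<zeta> < 1" and a0: "(exp 1 - 2) / (2 * (exp 1 - 1)) \<le> \<alpha>" and a1: "\<alpha> < 1"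
  shows "crit (2 * (of_real \<alpha> + (1 - of_real \<alpha>) * exp \<zeta>) - 1)"
proof -
  define e where "e = exp (1::real)"
  have e1: "1 < e" "e < 3" using e_bounds by (auto simp: e_def)
  define b where "b = (e - 2) / (2 * (e - 1))"
  have b1: "1 - b = e / (2 * (e - 1))" unfolding b_def using e1 by (simp add: field_simps)
  have bpos: "1 - b > 0" unfolding b1 using e1 by simp
  define l where "l = (1 - \<alpha>) / (1 - b)"
  have l0: "0 < l" unfolding l_def using a1 bpos by simp
  have l1: "l \<le> 1" unfolding l_def using a0 bpos by (simp add: b_def e_def)
  have le: "l * (e / (e - 1)) = 2 * (1 - \<alpha>)" unfolding l_def b1 using e1 by (simp add: field_simps)
  define v0 where "v0 = (of_real e * exp \<zeta> - 1) / of_real (e - 1)"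
  have ce: "(of_real (e - 1) :: complex) \<noteq> 0" using e1 by simp
  have v01: "v0 - 1 = of_real (e / (e - 1)) * (exp \<zeta> - 1)"
    unfolding v0_def using ce by (simp add: field_simps)
  have "1 + of_real l * (v0 - 1) = 1 + of_real (l * (e / (e - 1))) * (exp \<zeta> - 1)"
    unfolding v01 by simp
  also have "\<dots> = 2 * (of_real \<alpha> + (1 - of_real \<alpha>) * exp \<zeta>) - 1"
    unfolding le by (simp add: algebra_simps)
  finally have eq: "2 * (of_real \<alpha> + (1 - of_real \<alpha>) * exp \<zeta>) - 1 = 1 + of_real l * (v0 - 1)" by simp
  have "crit v0" unfolding v0_def e_def by (rule exp_crit0[OF z1])
  then show ?thesis unfolding eq by (rule crit_star[OF _ l0 l1])
qed

lemma phi_re: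
  fixes \<zeta> :: complex
  assumes "cmod \<zeta> < 1"
  shows "Re (1 + \<zeta> + \<zeta>^2/2) > 1/4"
proof -
  define x where "x = Re \<zeta>"
  define y where "y = Im \<zeta>"
  have "(cmod \<zeta>)^2 < 1" using assms by (simp add: abs_square_less_1)
  then have xy: "x^2 + y^2 < 1" unfolding cmod_power2 x_def y_def .
  have "Re (1 + \<zeta> + \<zeta>^2/2) = 1 + x + (x^2 - y^2)/2" unfolding x_def y_def by (simp add: Re_power2)
  moreover have "1 + x + (x^2 - y^2)/2 > (x + 1/2)^2 + 1/4"
  proof -
    have "(x + 1/2)^2 = x^2 + x + 1/4" by (simp add: power2_eq_square algebra_simps)
    then show ?thesis using xy by (simp add: diff_divide_distrib)
  qed
  moreover have "(x + 1/2)^2 \<ge> 0" by simp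
  ultimately show ?thesis by linarith
qed

lemma kS_disk:
  fixes p :: complex and k :: real
  assumes k: "k \<ge> 5/3" and h: "Re p > k * cmod (p - 1)"
  shows "cmod (p - 3/2) < 1"
proof -
  define X where "X = Re p - 1"
  define Y where "Y = Im p"
  define r where "r = cmod (p - 1)"
  have r0: "r \<ge> 0" unfolding r_def by simp
  have rr: "r^2 = X^2 + Y^2" unfolding r_def cmod_power2 X_def Y_def by simp
  have "k * r \<ge> 5/3 * r" using k r0 by (intro mult_right_mono) auto
  then have h1: "5 * r < 3 * (1 + X)" using h unfolding X_def r_def by simp
  have Xr: "\<bar>X\<bar> \<le> r" unfolding X_def r_def using abs_Re_le_cmod[of "p - 1"] by simp
  have X1: "X < 3/2" "X > -3/8" using h1 Xr by auto
  have "(5 * r)^2 < (3 * (1 + X))^2" using h1 r0 by (intro power_strict_mono) auto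
  then have h2: "25 * r^2 < 9 * (1 + X)^2" by (simp add: power2_eq_square algebra_simps)
  have "(X - 3/2) * (36 * X + 26) \<le> 0" using X1 by (intro mult_nonpos_nonneg) auto
  then have h3: "9 * (1 + X)^2 \<le> 25 * (X + 3/4)" by (simp add: power2_eq_square algebra_simps)
  have "(cmod (p - 3/2))^2 = (X - 1/2)^2 + Y^2" unfolding cmod_power2 X_def Y_def by simp
  also have "\<dots> = r^2 - X + 1/4" unfolding rr by (simp add: power2_eq_square algebra_simps)
  also have "\<dots> < 1" using h2 h3 by simp
  finally have "(cmod (p - 3/2))^2 < 1^2" by simp
  then show ?thesis by (rule power_less_imp_less_base) auto
qed

lemma sqrt_disk1:
  fixes s :: complex
  assumes "Re s \<ge> 0" "cmod (s^2 - 1) < 1"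
  shows "cmod (s - 2) < 2"
proof -
  define a where "a = Re s"
  define b where "b = Im s"
  have a0: "a \<ge> 0" using assms a_def by simp
  have "(cmod (s^2 - 1))^2 < 1" using assms by (simp add: abs_square_less_1)
  moreover have "(cmod (s^2 - 1))^2 = (a^2 - b^2 - 1)^2 + (2*a*b)^2"
    unfolding cmod_power2 a_def b_def by (simp add: power2_eq_square algebra_simps)
  ultimately have "(a^2 + b^2)^2 < 2*(a^2 - b^2)" by (simp add: power2_eq_square algebra_simps)
  then have h: "(a^2 + b^2)^2 < 2*a^2" by (smt (verit) zero_le_power2)
  have "a^2 + b^2 < 4*a"
  proof (rule ccontr)
    assume "\<not> a^2 + b^2 < 4*a"
    then have "4*a \<le> a^2 + b^2" by simp
    then have "(4*a)^2 \<le> (a^2 + b^2)^2" using a0 by (intro power_mono) auto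
    then show False using h by (simp add: power2_eq_square) (smt (verit) zero_le_power2 power2_eq_square)
  qed
  then have "(cmod (s - 2))^2 < 2^2" unfolding cmod_power2 a_def[symmetric] b_def[symmetric]
    by (simp add: a_def b_def power2_eq_square algebra_simps)
  then show ?thesis by (smt (verit) norm_ge_zero power_mono)
qed

lemma sqrt_disk2:
  fixes s :: complex
  assumes "Re s \<ge> 0" "cmod (s^2 - 1) < 3/4"
  shows "cmod (s - 3/2) < 1"
proof -
  define a where "a = Re s"
  define b where "b = Im s"
  define r where "r = a^2 + b^2"
  have a0: "a \<ge> 0" using assms a_def by simp
  have "(cmod (s^2 - 1))^2 < (3/4)^2" using assms by (intro power_strict_mono) auto
  moreover have "(cmod (s^2 - 1))^2 = (a^2 - b^2 - 1)^2 + (2*a*b)^2"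
    unfolding cmod_power2 a_def b_def by (simp add: power2_eq_square algebra_simps)
  ultimately have "r^2 - 2*(a^2 - b^2) + 1 < 9/16" unfolding r_def by (simp add: power2_eq_square algebra_simps)
  then have h1: "4*a^2 > r^2 + 2*r + 7/16" unfolding r_def by (simp add: power2_eq_square algebra_simps)
  have "cmod (s^2) = r" unfolding r_def a_def b_def norm_power cmod_power2 by simp
  moreover have "1 \<le> cmod (s^2) + cmod (s^2 - 1)" using norm_triangle_ineq4[of "s^2" "s^2 - 1"] by simp
  ultimately have r1: "r > 1/4" using assms by simp
  have "(r - 1/4) * (5*r/4 + 37/16) \<ge> 0" using r1 by simp
  moreover have "(r - 1/4) * (5*r/4 + 37/16) = 5/4*r^2 + 2*r - 37/64" by (simp add: power2_eq_square field_simps)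
  moreover have "(r + 5/4)^2 = r^2 + 5/2*r + 25/16" by (simp add: power2_eq_square algebra_simps)
  ultimately have "(9/4) * (r^2 + 2*r + 7/16) \<ge> (r + 5/4)^2" by (simp add: algebra_simps)
  then have "(r + 5/4)^2 < (3*a)^2" using h1 by (simp add: power2_eq_square)
  then have h2: "r + 5/4 < 3*a" using a0 by (smt (verit) power_mono r1)
  have "(cmod (s - 3/2))^2 = (a - 3/2)^2 + b^2" unfolding cmod_power2 a_def b_def by simp
  also have "\<dots> = r - 3*a + 9/4" unfolding r_def by (simp add: power2_eq_square algebra_simps)
  also have "\<dots> < 1" using h2 by simp
  finally have "(cmod (s - 3/2))^2 < 1^2" by simp
  then show ?thesis by (rule power_less_imp_less_base) auto
qed


lemma L_disk:
  fixes \<zeta> :: complex and \<alpha> :: real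
  assumes z1: "cmod \<zeta> < 1" and a: "1/2 \<le> \<alpha>" "\<alpha> < 1"
  shows "cmod (of_real \<alpha> + (1 - of_real \<alpha>) * csqrt (1 + \<zeta>) - 3/2) < 1"
proof -
  define s where "s = csqrt (1 + \<zeta>)"
  have s21: "s^2 - 1 = \<zeta>" unfolding s_def by simp
  have Res: "Re s \<ge> 0" unfolding s_def by (rule Re_csqrt)
  have s2: "cmod (s - 2) < 2" by (rule sqrt_disk1[OF Res]) (use s21 z1 in simp)
  have eq: "of_real \<alpha> + (1 - of_real \<alpha>) * s - 3/2 = of_real (1 - \<alpha>) * (s - 2) + of_real (1/2 - \<alpha>)"
    by (simp add: algebra_simps)
  have "cmod (of_real (1 - \<alpha>) * (s - 2) + of_real (1/2 - \<alpha>)) \<le> cmod (of_real (1 - \<alpha>) * (s - 2)) + cmod (of_real (1/2 - \<alpha>) :: complex)"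
    by (rule norm_triangle_ineq)
  also have "\<dots> = \<bar>1 - \<alpha>\<bar> * cmod (s - 2) + \<bar>1/2 - \<alpha>\<bar>" by (simp only: norm_mult norm_of_real)
  also have "\<dots> = (1 - \<alpha>) * cmod (s - 2) + (\<alpha> - 1/2)" using a by simp
  also have "\<dots> < (1 - \<alpha>) * 2 + (\<alpha> - 1/2)"
  proof -
    have "(1 - \<alpha>) * cmod (s - 2) < (1 - \<alpha>) * 2" using a s2 by (intro mult_strict_left_mono) auto
    then show ?thesis by linarith
  qed
  also have "\<dots> \<le> 1" using a by simp
  finally show ?thesis unfolding s_def[symmetric] eq .
qed

lemma jan_disk:
  fixes A B :: real and \<zeta> :: complex
  assumes z1: "cmod \<zeta> < 1" and B: "-1 < B" "B < A" "A \<le> 1"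
    and cond: "(1 - B^2 < 2 * (1 - A*B) \<and> 2 * (1 - A*B) \<le> 3 * (1 - B^2) \<and> 2*A \<le> 1 + B) \<or>
         (3 * (1 - B^2) \<le> 2 * (1 - A*B) \<and> 2 * (1 - A*B) < 5 * (1 - B^2) \<and> 2*A \<le> 3 + 5*B)"
  shows "cmod ((1 + of_real A * \<zeta>) / (1 + of_real B * \<zeta>) - 3/2) < 1"
proof -
  define x where "x = Re \<zeta>"
  define y where "y = Im \<zeta>"
  have "(cmod \<zeta>)^2 < 1" using z1 by (simp add: abs_square_less_1)
  then have xy: "x^2 + y^2 < 1" unfolding cmod_power2 x_def y_def .
  have B1: "B < 1" using B by simp
  define D where "D = 1 - B^2"
  have D0: "D > 0" unfolding D_def using B B1 by (simp add: abs_square_less_1)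
  define w where "w = 1 + of_real B * \<zeta>"
  have "(cmod w)^2 - (cmod (of_real B + \<zeta>))^2 = (1 + B*x)^2 + (B*y)^2 - ((B + x)^2 + y^2)"
    unfolding w_def cmod_power2 x_def y_def by simp
  also have "\<dots> = D * (1 - (x^2 + y^2))" unfolding D_def by (simp add: power2_eq_square algebra_simps)
  also have "\<dots> > 0" using D0 xy by simp
  finally have "(cmod (of_real B + \<zeta>))^2 < (cmod w)^2" by simp
  then have lt: "cmod (of_real B + \<zeta>) < cmod w" by (rule power_less_imp_less_base) auto
  then have w0: "w \<noteq> 0" by auto
  define c0 where "c0 = (1 - A*B) / D"
  define r0 where "r0 = (A - B) / D"
  have r0p: "r0 > 0" unfolding r0_def using B D0 by simp
  have num: "(1 + of_real A * \<zeta>) * of_real D - of_real (1 - A*B) * w = of_real (A - B) * (of_real B + \<zeta>)"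
    unfolding w_def D_def by (simp add: algebra_simps power2_eq_square)
  have Dc: "(of_real D :: complex) \<noteq> 0" using D0 by simp
  have "(1 + of_real A * \<zeta>) / w - of_real c0 = ((1 + of_real A * \<zeta>) * of_real D - of_real (1 - A*B) * w) / (of_real D * w)"
    unfolding c0_def using w0 Dc by (simp add: field_simps)
  also have "\<dots> = of_real r0 * ((of_real B + \<zeta>) / w)"
    unfolding num r0_def using w0 Dc by (simp add: field_simps)
  finally have key: "(1 + of_real A * \<zeta>) / w - of_real c0 = of_real r0 * ((of_real B + \<zeta>) / w)" .
  have "cmod ((1 + of_real A * \<zeta>) / w - of_real c0) = r0 * (cmod (of_real B + \<zeta>) / cmod w)"
    unfolding key using r0p by (simp add: norm_mult norm_divide)
  also have "\<dots> < r0 * 1" using lt w0 r0p by (intro mult_strict_left_mono) auto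
  finally have pc: "cmod ((1 + of_real A * \<zeta>) / w - of_real c0) < r0" by simp
  have "cmod ((1 + of_real A * \<zeta>) / w - 3/2) \<le> cmod ((1 + of_real A * \<zeta>) / w - of_real c0) + cmod (of_real c0 - 3/2 :: complex)"
    using norm_triangle_ineq[of "(1 + of_real A * \<zeta>) / w - of_real c0" "of_real c0 - 3/2"] by simp
  also have "cmod (of_real c0 - 3/2 :: complex) = \<bar>c0 - 3/2\<bar>"
  proof -
    have "(of_real c0 - 3/2 :: complex) = of_real (c0 - 3/2)" by simp
    then show ?thesis by (simp only: norm_of_real)
  qed
  also have "cmod ((1 + of_real A * \<zeta>) / w - of_real c0) + \<bar>c0 - 3/2\<bar> < r0 + \<bar>c0 - 3/2\<bar>" using pc by simp
  also have "r0 + \<bar>c0 - 3/2\<bar> \<le> 1"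
  using cond
  proof (elim disjE conjE)
    assume True: "2 * (1 - A*B) \<le> 3 * (1 - B^2)" and a2: "2*A \<le> 1 + B"
    have c32: "c0 \<le> 3/2" unfolding c0_def using D0 True by (simp add: D_def divide_le_eq)
    have "2*((1 - A*B) - (A - B)) - D = (1+B)*(1 + B - 2*A)" by (simp add: D_def power2_eq_square algebra_simps)
    moreover have "(1+B)*(1 + B - 2*A) \<ge> 0" using B a2 by simp
    ultimately have "D/2 \<le> (1 - A*B) - (A - B)" by simp
    then have "1/2 \<le> ((1 - A*B) - (A - B)) / D" using D0 by (simp add: le_divide_eq)
    also have "\<dots> = c0 - r0" unfolding c0_def r0_def by (simp add: diff_divide_distrib)
    finally show ?thesis using c32 by simp
  next
    assume False: "3 * (1 - B^2) \<le> 2 * (1 - A*B)" and a2: "2*A \<le> 3 + 5*B"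
    have c32: "c0 \<ge> 3/2" unfolding c0_def using D0 False by (simp add: D_def le_divide_eq)
    have "5*D/2 - ((1 - A*B) + (A - B)) = (1-B)*(3 + 5*B - 2*A)/2" by (simp add: D_def power2_eq_square field_simps)
    moreover have "(1-B)*(3 + 5*B - 2*A) \<ge> 0" using B1 a2 by simp
    ultimately have "(1 - A*B) + (A - B) \<le> 5/2 * D" by simp
    then have "((1 - A*B) + (A - B)) / D \<le> 5/2" using D0 by (simp add: divide_le_eq)
    moreover have "((1 - A*B) + (A - B)) / D = c0 + r0" unfolding c0_def r0_def by (simp add: add_divide_distrib)
    ultimately show ?thesis using c32 by simp
  qed
  finally show ?thesis unfolding w_def .
qed


lemma phi_M_real:
  fixes a Y M :: real
  assumes a: "0 < a" and Y0: "0 \<le> Y" and Yb: "Y < 2*a - a^2" and M: "M \<ge> (3 + sqrt 5)/4"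
  shows "(a^2 + 1 - Y)^2/4 + a^2*Y < M*(a^2 + 1 - Y)"
proof -
  define r5 where "r5 = sqrt (5::real)"
  have s2: "r5^2 = 5" unfolding r5_def by simp
  have r50: "r5 \<ge> 0" unfolding r5_def by simp
  have "2^2 < r5^2" using s2 by simp
  then have r5g: "r5 > 2" using r50 by (rule power_less_imp_less_base)
  define m where "m = (3 + r5)/4"
  define P where "P = a^2 + 1 - Y"
  define d where "d = 2*a - a^2 - Y"
  have d0: "d > 0" using Yb by (simp add: d_def)
  have P0: "P > 0"
  proof -
    have "P = (a - 1)^2 + a^2 + d" unfolding P_def d_def by (simp add: power2_eq_square algebra_simps)
    then show ?thesis using d0 by (smt (verit) zero_le_power2)
  qed
  have id1: "P^2 + 4*a^2*Y - 4*m*P = (8*a^2 - 4*a + 1 - 4*m*(2*a^2 - 2*a + 1)) + d*(d - 4*a + 2 - 4*m)"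
    unfolding P_def d_def by (simp add: power2_eq_square algebra_simps)
  have id2: "(2*r5 - 2)*(a - m)^2 - ((2*r5 - 2)*a^2 - (2*r5 + 2)*a + (2 + r5)) = (r5^2 - 5)*((r5 + 5)/8 - a)"
    unfolding m_def by (simp add: power2_eq_square field_simps)
  have id3: "4*m*(2*a^2 - 2*a + 1) - (8*a^2 - 4*a + 1) = (2*r5 - 2)*a^2 - (2*r5 + 2)*a + (2 + r5)"
    unfolding m_def by (simp add: field_simps)
  have "(2*r5 - 2)*(a - m)^2 \<ge> 0" using r5g by simp
  then have G: "8*a^2 - 4*a + 1 - 4*m*(2*a^2 - 2*a + 1) \<le> 0" using id2 id3 s2 by simp
  have "d \<le> 2*a - a^2" unfolding d_def using Y0 by simp
  moreover have "4*m = 3 + r5" unfolding m_def by simp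
  moreover have "a^2 \<ge> 0" by simp
  ultimately have "d - 4*a + 2 - 4*m < 0" using r5g a by linarith
  then have H: "d*(d - 4*a + 2 - 4*m) < 0" using d0 by (simp add: mult_pos_neg)
  have "P^2 + 4*a^2*Y - 4*m*P < 0" using id1 G H by simp
  then have "P^2/4 + a^2*Y < m*P" by simp
  also have "m*P \<le> M*P" using M P0 unfolding m_def r5_def by (intro mult_right_mono) auto
  finally show ?thesis unfolding P_def .
qed

lemma phi_M:
  fixes \<zeta> :: complex and M :: real
  assumes z1: "cmod \<zeta> < 1" and M: "M \<ge> (3 + sqrt 5)/4"
  shows "cmod (1 + \<zeta> + \<zeta>^2/2 - of_real M) < M"
proof -
  define x where "x = Re \<zeta>"
  define y where "y = Im \<zeta>"
  have "(cmod \<zeta>)^2 < 1" using z1 by (simp add: abs_square_less_1)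
  then have xy: "x^2 + y^2 < 1" unfolding cmod_power2 x_def y_def .
  then have "x^2 < 1" by (smt (verit) zero_le_power2)
  then have x1: "-1 < x" "x < 1" by (auto simp: abs_square_less_1 abs_less_iff)
  define a where "a = 1 + x"
  have a0: "0 < a" using x1 a_def by simp
  have Yb: "y^2 < 2*a - a^2" using xy unfolding a_def by (simp add: power2_eq_square algebra_simps)
  have M0: "M > 0"
  proof -
    have "(0::real) < (3 + sqrt 5)/4" by (simp add: add_pos_nonneg)
    then show ?thesis using M by linarith
  qed
  have re: "Re (1 + \<zeta> + \<zeta>^2/2 - of_real M) = (a^2 + 1 - y^2)/2 - M"
    unfolding a_def x_def y_def by (simp add: Re_power2 power2_eq_square field_simps)
  have im: "Im (1 + \<zeta> + \<zeta>^2/2 - of_real M) = a * y"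
    unfolding a_def x_def y_def by (simp add: power2_eq_square algebra_simps)
  have "(cmod (1 + \<zeta> + \<zeta>^2/2 - of_real M))^2 = ((a^2 + 1 - y^2)/2 - M)^2 + (a*y)^2"
    unfolding cmod_power2 re im ..
  also have "\<dots> = ((a^2 + 1 - y^2)^2/4 + a^2*y^2 - M*(a^2 + 1 - y^2)) + M^2"
    by (simp add: power2_eq_square field_simps)
  also have "\<dots> < M^2" using phi_M_real[OF a0 _ Yb M] by simp
  finally have "(cmod (1 + \<zeta> + \<zeta>^2/2 - of_real M))^2 < M^2" .
  then show ?thesis by (rule power_less_imp_less_base) (use M0 in simp)
qed

lemma janM_W:
  fixes p :: complex and M :: real
  assumes M: "M > 1/2" and h: "cmod (p - of_real M) < M"
  shows "cmod (p - 1) < cmod (1 - of_real (-(M-1)/M) * p)"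
proof -
  define B where "B = -(M-1)/M"
  define X where "X = Re p"
  define Y where "Y = Im p"
  have M0: "M > 0" using M by simp
  have MB: "M * B = 1 - M" unfolding B_def using M0 by (simp add: field_simps)
  have "(cmod (p - of_real M))^2 < M^2" using h by (intro power_strict_mono) auto
  then have h2: "X^2 + Y^2 < 2*M*X" unfolding cmod_power2 X_def Y_def by (simp add: power2_eq_square algebra_simps)
  have n1: "(cmod (1 - of_real B * p))^2 = (1 - B*X)^2 + (B*Y)^2"
    unfolding cmod_power2 X_def Y_def by simp
  have n2: "(cmod (p - 1))^2 = (X - 1)^2 + Y^2" unfolding cmod_power2 X_def Y_def by simp
  have "M^2 * ((1 - B*X)^2 + (B*Y)^2) = (M - (M*B)*X)^2 + ((M*B)*Y)^2"
    by (simp add: power2_eq_square algebra_simps)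
  also have "\<dots> = (M - (1 - M)*X)^2 + ((1 - M)*Y)^2" unfolding MB ..
  finally have e1: "M^2 * ((1 - B*X)^2 + (B*Y)^2) = (M - (1 - M)*X)^2 + ((1 - M)*Y)^2" .
  have e2: "(M - (1 - M)*X)^2 + ((1 - M)*Y)^2 - M^2 * ((X - 1)^2 + Y^2) = (2*M - 1)*(2*M*X - X^2 - Y^2)"
    by (simp add: power2_eq_square algebra_simps)
  have "(2*M - 1)*(2*M*X - X^2 - Y^2) > 0" using M h2 by simp
  then have "M^2 * ((X - 1)^2 + Y^2) < M^2 * ((1 - B*X)^2 + (B*Y)^2)" using e1 e2 by simp
  then have "(X - 1)^2 + Y^2 < (1 - B*X)^2 + (B*Y)^2" using M0 by simp
  then have "(cmod (p - 1))^2 < (cmod (1 - of_real B * p))^2" unfolding n1 n2 .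
  then show ?thesis unfolding B_def by (rule power_less_imp_less_base) simp
qed

lemma div_cancel_helper:
  fixes p X d :: complex
  assumes "d \<noteq> 0" "X \<noteq> 0"
  shows "(p * X / d) / (X / d) = p"
  using assms by (simp add: field_simps)

lemma subord_AB:
  fixes p :: "complex \<Rightarrow> complex" and B :: real
  assumes hp: "p holomorphic_on ball 0 1" and p0: "p 0 = 1" and B1: "B \<noteq> 1"
    and h: "\<forall>z\<in>ball 0 1. cmod (p z - 1) < cmod (1 - of_real B * p z)"
  shows "subord p (\<lambda>z. (1 + of_real 1 * z) / (1 + of_real B * z))"
  unfolding subord_def
proof (intro exI[of _ "\<lambda>z. (p z - 1) / (1 - of_real B * p z)"] conjI ballI)
  have nz: "1 - of_real B * p z \<noteq> 0" if "z \<in> ball 0 1" for z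
    using h that by fastforce
  show "(\<lambda>z. (p z - 1) / (1 - of_real B * p z)) holomorphic_on ball 0 1"
    using nz by (intro holomorphic_intros hp) auto
  show "(\<lambda>z. (p z - 1) / (1 - of_real B * p z)) ` ball 0 1 \<subseteq> ball 0 1"
  proof
    fix u assume "u \<in> (\<lambda>z. (p z - 1) / (1 - of_real B * p z)) ` ball 0 1"
    then obtain z where z: "z \<in> ball 0 1" "u = (p z - 1) / (1 - of_real B * p z)" by auto
    have "cmod u = cmod (p z - 1) / cmod (1 - of_real B * p z)" using z by (simp add: norm_divide)
    also have "\<dots> < 1" using h z nz[OF z(1)] by simp
    finally show "u \<in> ball 0 1" by simp
  qed
  show "(p 0 - 1) / (1 - of_real B * p 0) = 0" using p0 by simp
  fix z :: complex assume z: "z \<in> ball 0 1"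
  have d: "1 - of_real B * p z \<noteq> 0" by (rule nz[OF z])
  have B1': "(1 - of_real B :: complex) \<noteq> 0" using B1 by (simp add: of_real_eq_1_iff[symmetric])
  have e1: "1 + of_real B * ((p z - 1) / (1 - of_real B * p z)) = (1 - of_real B) / (1 - of_real B * p z)"
    using d by (simp add: field_simps)
  have e2: "1 + of_real 1 * ((p z - 1) / (1 - of_real B * p z)) = p z * (1 - of_real B) / (1 - of_real B * p z)"
    using d by (simp add: field_simps)
  have "(p z * (1 - of_real B) / (1 - of_real B * p z)) / ((1 - of_real B) / (1 - of_real B * p z)) = p z"
    using d B1' by (rule div_cancel_helper)
  then show "p z = (1 + of_real 1 * ((p z - 1) / (1 - of_real B * p z))) /
      (1 + of_real B * ((p z - 1) / (1 - of_real B * p z)))"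
    by (simp only: e1 e2)
qed


lemma sector_real:
  fixes a Y :: real
  assumes a: "0 < a" and Y0: "0 \<le> Y" and Yb: "Y < 2*a - a^2"
  shows "20 * a^2 * Y < 27 * (a^2 + 1 - Y)^2"
proof -
  define Q where "Q = 2*a^2 - 2*a + 1"
  have Q0: "Q \<ge> 0"
  proof -
    have "Q = a^2 + (a - 1)^2" unfolding Q_def by (simp add: power2_eq_square algebra_simps)
    then show ?thesis by simp
  qed
  have "Q < a^2 + 1 - Y" unfolding Q_def using Yb by simp
  then have "Q^2 < (a^2 + 1 - Y)^2" using Q0 by (intro power_strict_mono) auto
  then have h1: "27 * Q^2 < 27 * (a^2 + 1 - Y)^2" by simp
  have id: "27 * Q^2 - 20 * a^2 * (2*a - a^2) = (4*a - 3)^2 * (8*a^2 - 4*a + 3)"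
    unfolding Q_def by (simp add: power2_eq_square algebra_simps)
  have "8*a^2 - 4*a + 3 = 8*(a - 1/4)^2 + 5/2" by (simp add: power2_eq_square algebra_simps)
  moreover have "(a - 1/4)^2 \<ge> 0" by simp
  ultimately have "8*a^2 - 4*a + 3 \<ge> 0" by linarith
  then have h2: "20 * a^2 * (2*a - a^2) \<le> 27 * Q^2" using id by (smt (verit) zero_le_power2 mult_nonneg_nonneg)
  have "20 * a^2 * Y \<le> 20 * a^2 * (2*a - a^2)" using Yb by (intro mult_left_mono) auto
  then show ?thesis using h1 h2 by linarith
qed

lemma phi_sector:
  fixes \<zeta> :: complex
  assumes z1: "cmod \<zeta> < 1"
  shows "\<bar>Im (1 + \<zeta> + \<zeta>^2/2)\<bar> < 3 * sqrt (3/5) * Re (1 + \<zeta> + \<zeta>^2/2)"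
proof -
  define x where "x = Re \<zeta>"
  define y where "y = Im \<zeta>"
  have "(cmod \<zeta>)^2 < 1" using z1 by (simp add: abs_square_less_1)
  then have xy: "x^2 + y^2 < 1" unfolding cmod_power2 x_def y_def .
  then have "x^2 < 1" by (smt (verit) zero_le_power2)
  then have x1: "-1 < x" "x < 1" by (auto simp: abs_square_less_1 abs_less_iff)
  define a where "a = 1 + x"
  have a0: "0 < a" using x1 a_def by simp
  have Yb: "y^2 < 2*a - a^2" using xy unfolding a_def by (simp add: power2_eq_square algebra_simps)
  have re: "Re (1 + \<zeta> + \<zeta>^2/2) = (a^2 + 1 - y^2)/2"
    unfolding a_def x_def y_def by (simp add: Re_power2 power2_eq_square field_simps)
  have im: "Im (1 + \<zeta> + \<zeta>^2/2) = a * y"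
    unfolding a_def x_def y_def by (simp add: power2_eq_square algebra_simps)
  have rp: "Re (1 + \<zeta> + \<zeta>^2/2) > 0" using phi_re[OF z1] by simp
  define T where "T = 3 * sqrt (3/5::real)"
  have T0: "T \<ge> 0" unfolding T_def by simp
  have T2: "T^2 = 27/5" unfolding T_def by (simp add: power_mult_distrib)
  have "(a * y)^2 = a^2 * y^2" by (simp add: power_mult_distrib)
  also have "\<dots> < 27/20 * (a^2 + 1 - y^2)^2" using sector_real[OF a0 _ Yb] by simp
  also have "\<dots> = (T * ((a^2 + 1 - y^2)/2))^2" unfolding power_mult_distrib T2 by (simp add: power_divide)
  finally have "\<bar>Im (1 + \<zeta> + \<zeta>^2/2)\<bar>^2 < (T * Re (1 + \<zeta> + \<zeta>^2/2))^2" unfolding im re by simp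
  then have "\<bar>Im (1 + \<zeta> + \<zeta>^2/2)\<bar> < T * Re (1 + \<zeta> + \<zeta>^2/2)"
    by (rule power_less_imp_less_base) (use T0 rp in simp)
  then show ?thesis unfolding T_def .
qed

lemma W_inv_helper:
  fixes q :: complex
  assumes "q + 1 \<noteq> 0"
  shows "(1 + (q - 1) / (q + 1)) / (1 - (q - 1) / (q + 1)) = q"
proof -
  have e1: "1 + (q - 1) / (q + 1) = q * 2 / (q + 1)" using assms by (simp add: field_simps)
  have e2: "1 - (q - 1) / (q + 1) = 2 / (q + 1)" using assms by (simp add: field_simps)
  have "(q * 2 / (q + 1)) / (2 / (q + 1)) = q" by (rule div_cancel_helper) (use assms in auto)
  then show ?thesis by (simp only: e1 e2)
qed

lemma SS_main:
  fixes f :: "complex \<Rightarrow> complex" and \<beta> :: real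
  assumes f: "f \<in> Scar" and b: "(2/pi) * arctan (3 * sqrt (3/5)) \<le> \<beta>" "\<beta> \<le> 1"
  shows "f \<in> SSstar \<beta>"
proof -
  have fA: "f \<in> classA" and fnz: "\<forall>z\<in>ball 0 1 - {0}. f z \<noteq> 0"
    using Sstar_basic f unfolding Scar_def by auto
  define p where "p = zdlog f"
  have hp: "p holomorphic_on ball 0 1" unfolding p_def by (rule zdlog_holo[OF fA fnz])
  have p0: "p 0 = 1" unfolding p_def zdlog_def by simp
  define T where "T = 3 * sqrt (3/5::real)"
  have T0: "T > 0" unfolding T_def by simp
  have aT: "arctan T > 0" using T0 by (simp add: arctan_less_iff[of 0, simplified])
  have hb: "arctan T \<le> \<beta> * pi / 2"
  proof -
    have "(2/pi) * arctan T \<le> \<beta>" using b unfolding T_def by simp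
    then have "(pi/2) * ((2/pi) * arctan T) \<le> (pi/2) * \<beta>" by (intro mult_left_mono) auto
    then show ?thesis by (simp add: field_simps)
  qed
  have b0: "\<beta> > 0"
  proof -
    have "(2/pi) * arctan T > 0" using aT by simp
    then show ?thesis using b unfolding T_def by linarith
  qed
  have pz: "Re (p z) > 1/4 \<and> \<bar>Im (p z)\<bar> < T * Re (p z)" if z: "z \<in> ball 0 1" for z
  proof -
    obtain \<zeta> where \<zeta>: "\<zeta> \<in> ball 0 1" "p z = 1 + \<zeta> + \<zeta>^2/2"
      using Sstar_image[OF f[unfolded Scar_def] z] unfolding p_def by auto
    have c: "cmod \<zeta> < 1" using \<zeta>(1) by simp
    show ?thesis unfolding \<zeta>(2) T_def using phi_re[OF c] phi_sector[OF c] by simp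
  qed
  have pnp: "p z \<notin> \<real>\<^sub>\<le>\<^sub>0" if "z \<in> ball 0 1" for z
  proof
    assume "p z \<in> \<real>\<^sub>\<le>\<^sub>0"
    then obtain r where "r \<le> 0" "p z = of_real r" by (auto elim!: nonpos_Reals_cases)
    then show False using pz[OF that] by simp
  qed
  have pn0: "p z \<noteq> 0" if "z \<in> ball 0 1" for z using pz[OF that] by auto
  have imL: "\<bar>Im (Ln (p z))\<bar> < \<beta> * pi / 2" if z: "z \<in> ball 0 1" for z
  proof -
    have r: "Re (p z) > 0" using pz[OF z] by simp
    have "Im (Ln (p z)) = arctan (Im (p z) / Re (p z))"
      using Arg_eq_Im_Ln[OF pn0[OF z]] arg_conv_arctan[OF r] by simp
    moreover have "\<bar>Im (p z) / Re (p z)\<bar> < T"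
    proof -
      have "\<bar>Im (p z) / Re (p z)\<bar> = \<bar>Im (p z)\<bar> / Re (p z)" using r by (simp add: abs_divide)
      also have "\<dots> < T" using pz[OF z] r by (simp add: pos_divide_less_eq)
      finally show ?thesis .
    qed
    then have "arctan \<bar>Im (p z) / Re (p z)\<bar> < arctan T" by (simp add: arctan_less_iff)
    ultimately show ?thesis using hb by (simp add: abs_arctan)
  qed
  define L where "L = (\<lambda>z. Ln (p z) / of_real \<beta>)"
  have imL2: "\<bar>Im (L z)\<bar> < pi / 2" if z: "z \<in> ball 0 1" for z
  proof -
    have "Im (L z) = Im (Ln (p z)) / \<beta>" unfolding L_def by (simp add: Im_divide_of_real)
    moreover have "\<bar>Im (Ln (p z))\<bar> / \<beta> < pi / 2" using imL[OF z] b0 by (simp add: divide_less_eq mult.commute)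
    ultimately show ?thesis using b0 by (simp add: abs_divide)
  qed
  define q where "q = (\<lambda>z. exp (L z))"
  have qre: "Re (q z) > 0" if z: "z \<in> ball 0 1" for z
  proof -
    have "cos (Im (L z)) > 0" using imL2[OF z] by (intro cos_gt_zero_pi) auto
    then show ?thesis unfolding q_def by (simp add: Re_exp)
  qed
  have q1: "q z + 1 \<noteq> 0" if z: "z \<in> ball 0 1" for z
  proof
    assume "q z + 1 = 0"
    then have "Re (q z + 1) = 0" by simp
    then show False using qre[OF z] by simp
  qed
  define W where "W = (\<lambda>z. (q z - 1) / (q z + 1))"
  have hL: "L holomorphic_on ball 0 1" unfolding L_def using pnp by (intro holomorphic_intros hp) auto
  have hq: "q holomorphic_on ball 0 1" unfolding q_def by (intro holomorphic_intros hL)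
  have hW: "W holomorphic_on ball 0 1" unfolding W_def using q1 by (intro holomorphic_intros hq) auto
  have Wb: "W ` ball 0 1 \<subseteq> ball 0 1"
  proof
    fix u assume "u \<in> W ` ball 0 1"
    then obtain z where z: "z \<in> ball 0 1" "u = W z" by auto
    have "(cmod (q z - 1))^2 < (cmod (q z + 1))^2"
      unfolding cmod_power2 using qre[OF z(1)] by (simp add: power2_eq_square algebra_simps)
    then have "cmod (q z - 1) < cmod (q z + 1)" by (rule power_less_imp_less_base) simp
    then have "cmod (W z) < 1" unfolding W_def using q1[OF z(1)] by (simp add: norm_divide divide_less_eq)
    then show "u \<in> ball 0 1" using z by simp
  qed
  have W0: "W 0 = 0" unfolding W_def q_def L_def using p0 by simp
  have Weq: "p z = ((1 + W z) / (1 - W z)) powr (of_real \<beta>)" if z: "z \<in> ball 0 1" for z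
  proof -
    have "(1 + W z) / (1 - W z) = q z" unfolding W_def by (rule W_inv_helper[OF q1[OF z]])
    moreover have "q z \<noteq> 0" unfolding q_def by simp
    moreover have "ln (q z) = L z"
      unfolding q_def using imL2[OF z] by (intro Ln_exp) (auto simp: abs_less_iff)
    moreover have "of_real \<beta> * L z = Ln (p z)" unfolding L_def using b0 by simp
    ultimately show ?thesis using pn0[OF z] by (simp add: powr_def)
  qed
  show ?thesis unfolding SSstar_def Sstar_def subord_def
    using fA fnz hW Wb W0 Weq unfolding p_def by blast
qed


lemma part1: "\<forall>\<alpha>::real. 0 \<le> \<alpha> \<and> \<alpha> \<le> 1/4 \<longrightarrow> Scar \<subseteq> Sstar_ord \<alpha>"
proof (intro allI impI subsetI)
  fix \<alpha> :: real and f assume a: "0 \<le> \<alpha> \<and> \<alpha> \<le> 1/4" and f: "f \<in> Scar"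
  have fA: "f \<in> classA" and fnz: "\<forall>z\<in>ball 0 1 - {0}. f z \<noteq> 0"
    using Sstar_basic f unfolding Scar_def by auto
  have "Re (zdlog f z) > \<alpha>" if z: "z \<in> ball 0 1" for z
  proof -
    obtain \<zeta> where \<zeta>: "\<zeta> \<in> ball 0 1" "zdlog f z = 1 + \<zeta> + \<zeta>^2/2"
      using Sstar_image[OF f[unfolded Scar_def] z] by auto
    have "cmod \<zeta> < 1" using \<zeta>(1) by simp
    then show ?thesis using phi_re a \<zeta>(2) by fastforce
  qed
  then show "f \<in> Sstar_ord \<alpha>" unfolding Sstar_ord_def using fA fnz by auto
qed

lemma part2: "\<forall>\<beta>::real. (2/pi) * arctan (3 * sqrt (3/5)) \<le> \<beta> \<and> \<beta> \<le> 1 \<longrightarrow> Scar \<subseteq> SSstar \<beta>"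
  using SS_main by blast

lemma part3: "\<forall>k::real. k \<ge> 5/3 \<longrightarrow> kSstar k \<subseteq> Scar"
proof (intro allI impI subsetI)
  fix k :: real and f assume k: "k \<ge> 5/3" and f: "f \<in> kSstar k"
  have fA: "f \<in> classA" and fnz: "\<forall>z\<in>ball 0 1 - {0}. f z \<noteq> 0"
    and h: "\<forall>z\<in>ball 0 1. Re (zdlog f z) > k * cmod (zdlog f z - 1)"
    using f unfolding kSstar_def by auto
  show "f \<in> Scar" using fA fnz h k by (intro Scar_intro disk_crit kS_disk ballI) auto
qed

lemma part4: "\<forall>\<alpha>::real. (exp 1 - 2) / (2 * (exp 1 - 1)) \<le> \<alpha> \<and> \<alpha> < 1 \<longrightarrow> Sstar_e \<alpha> \<subseteq> Scar"
proof (intro allI impI subsetI)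
  fix \<alpha> :: real and f assume a: "(exp 1 - 2) / (2 * (exp 1 - 1)) \<le> \<alpha> \<and> \<alpha> < 1" and f: "f \<in> Sstar_e \<alpha>"
  have fA: "f \<in> classA" and fnz: "\<forall>z\<in>ball 0 1 - {0}. f z \<noteq> 0"
    using Sstar_basic f unfolding Sstar_e_def by auto
  have "crit (2 * zdlog f z - 1)" if z: "z \<in> ball 0 1" for z
  proof -
    obtain \<zeta> where \<zeta>: "\<zeta> \<in> ball 0 1" "zdlog f z = of_real \<alpha> + (1 - of_real \<alpha>) * exp \<zeta>"
      using Sstar_image[OF f[unfolded Sstar_e_def] z] by auto
    have "cmod \<zeta> < 1" using \<zeta>(1) by simp
    then show ?thesis unfolding \<zeta>(2) using a by (intro exp_crit) auto
  qed
  then show "f \<in> Scar" using fA fnz by (intro Scar_intro) auto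
qed

lemma part5: "\<forall>\<alpha>::real. 1/2 \<le> \<alpha> \<and> \<alpha> < 1 \<longrightarrow> Sstar_L \<alpha> \<subseteq> Scar"
proof (intro allI impI subsetI)
  fix \<alpha> :: real and f assume a: "1/2 \<le> \<alpha> \<and> \<alpha> < 1" and f: "f \<in> Sstar_L \<alpha>"
  have fA: "f \<in> classA" and fnz: "\<forall>z\<in>ball 0 1 - {0}. f z \<noteq> 0"
    using Sstar_basic f unfolding Sstar_L_def by auto
  have "crit (2 * zdlog f z - 1)" if z: "z \<in> ball 0 1" for z
  proof -
    obtain \<zeta> where \<zeta>: "\<zeta> \<in> ball 0 1" "zdlog f z = of_real \<alpha> + (1 - of_real \<alpha>) * csqrt (1 + \<zeta>)"
      using Sstar_image[OF f[unfolded Sstar_L_def] z] by auto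
    have "cmod \<zeta> < 1" using \<zeta>(1) by simp
    then show ?thesis unfolding \<zeta>(2) using a by (intro disk_crit L_disk) auto
  qed
  then show "f \<in> Scar" using fA fnz by (intro Scar_intro) auto
qed

lemma part6: "\<forall>c::real. 0 < c \<and> c \<le> 3/4 \<longrightarrow> Sstar_sqrt c \<subseteq> Scar"
proof (intro allI impI subsetI)
  fix c :: real and f assume c: "0 < c \<and> c \<le> 3/4" and f: "f \<in> Sstar_sqrt c"
  have fA: "f \<in> classA" and fnz: "\<forall>z\<in>ball 0 1 - {0}. f z \<noteq> 0"
    using Sstar_basic f unfolding Sstar_sqrt_def by auto
  have "crit (2 * zdlog f z - 1)" if z: "z \<in> ball 0 1" for z
  proof -
    obtain \<zeta> where \<zeta>: "\<zeta> \<in> ball 0 1" "zdlog f z = csqrt (1 + of_real c * \<zeta>)"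
      using Sstar_image[OF f[unfolded Sstar_sqrt_def] z] by auto
    have z1: "cmod \<zeta> < 1" using \<zeta>(1) by simp
    define s where "s = csqrt (1 + of_real c * \<zeta>)"
    have Res: "Re s \<ge> 0" unfolding s_def by (rule Re_csqrt)
    have "s^2 - 1 = of_real c * \<zeta>" unfolding s_def by simp
    then have "cmod (s^2 - 1) = c * cmod \<zeta>" using c by (simp add: norm_mult)
    also have "\<dots> < c * 1" using c z1 by (intro mult_strict_left_mono) auto
    also have "\<dots> \<le> 3/4" using c by simp
    finally have "cmod (s - 3/2) < 1" by (intro sqrt_disk2[OF Res])
    then show ?thesis unfolding \<zeta>(2) s_def[symmetric] by (rule disk_crit)
  qed
  then show "f \<in> Scar" using fA fnz by (intro Scar_intro) auto
qed

lemma part7: "\<forall>A B::real. -1 < B \<and> B < A \<and> A \<le> 1 \<and>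
        ((1 - B^2 < 2 * (1 - A*B) \<and> 2 * (1 - A*B) \<le> 3 * (1 - B^2) \<and> 2*A \<le> 1 + B) \<or>
         (3 * (1 - B^2) \<le> 2 * (1 - A*B) \<and> 2 * (1 - A*B) < 5 * (1 - B^2) \<and> 2*A \<le> 3 + 5*B))
        \<longrightarrow> Sstar_AB A B \<subseteq> Scar"
proof (intro allI impI subsetI)
  fix A B :: real and f
  assume h: "-1 < B \<and> B < A \<and> A \<le> 1 \<and>
        ((1 - B^2 < 2 * (1 - A*B) \<and> 2 * (1 - A*B) \<le> 3 * (1 - B^2) \<and> 2*A \<le> 1 + B) \<or>
         (3 * (1 - B^2) \<le> 2 * (1 - A*B) \<and> 2 * (1 - A*B) < 5 * (1 - B^2) \<and> 2*A \<le> 3 + 5*B))"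
    and f: "f \<in> Sstar_AB A B"
  have fA: "f \<in> classA" and fnz: "\<forall>z\<in>ball 0 1 - {0}. f z \<noteq> 0"
    using Sstar_basic f unfolding Sstar_AB_def by auto
  have "crit (2 * zdlog f z - 1)" if z: "z \<in> ball 0 1" for z
  proof -
    obtain \<zeta> where \<zeta>: "\<zeta> \<in> ball 0 1" "zdlog f z = (1 + of_real A * \<zeta>) / (1 + of_real B * \<zeta>)"
      using Sstar_image[OF f[unfolded Sstar_AB_def] z] by auto
    have z1: "cmod \<zeta> < 1" using \<zeta>(1) by simp
    have "cmod ((1 + of_real A * \<zeta>) / (1 + of_real B * \<zeta>) - 3/2) < 1"
      using h by (intro jan_disk[OF z1]) auto
    then show ?thesis unfolding \<zeta>(2) by (rule disk_crit)
  qed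
  then show "f \<in> Scar" using fA fnz by (intro Scar_intro) auto
qed

lemma part8: "\<forall>M::real. M \<ge> (3 + sqrt 5) / 4 \<longrightarrow> Scar \<subseteq> Sstar_AB 1 (-(M - 1) / M)"
proof (intro allI impI subsetI)
  fix M :: real and f assume M: "M \<ge> (3 + sqrt 5) / 4" and f: "f \<in> Scar"
  have fA: "f \<in> classA" and fnz: "\<forall>z\<in>ball 0 1 - {0}. f z \<noteq> 0"
    using Sstar_basic f unfolding Scar_def by auto
  have M2: "M > 1/2"
  proof -
    have "(0::real) \<le> sqrt 5" by simp
    then have "(3 + sqrt 5) / 4 \<ge> (3::real)/4" by simp
    then show ?thesis using M by linarith
  qed
  have B1: "-(M - 1) / M \<noteq> 1" using M2 by (simp add: divide_eq_1_iff)
  define p where "p = zdlog f"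
  have hp: "p holomorphic_on ball 0 1" unfolding p_def by (rule zdlog_holo[OF fA fnz])
  have p0: "p 0 = 1" unfolding p_def zdlog_def by simp
  have h: "\<forall>z\<in>ball 0 1. cmod (p z - 1) < cmod (1 - of_real (-(M - 1) / M) * p z)"
  proof
    fix z :: complex assume z: "z \<in> ball 0 1"
    obtain \<zeta> where \<zeta>: "\<zeta> \<in> ball 0 1" "p z = 1 + \<zeta> + \<zeta>^2/2"
      using Sstar_image[OF f[unfolded Scar_def] z] unfolding p_def by auto
    have z1: "cmod \<zeta> < 1" using \<zeta>(1) by simp
    have "cmod ((1 + \<zeta> + \<zeta>^2/2) - 1) < cmod (1 - of_real (-(M - 1) / M) * (1 + \<zeta> + \<zeta>^2/2))"
      by (rule janM_W[OF M2 phi_M[OF z1 M]])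
    then show "cmod (p z - 1) < cmod (1 - of_real (-(M - 1) / M) * p z)" unfolding \<zeta>(2) .
  qed
  have "subord p (\<lambda>z. (1 + of_real 1 * z) / (1 + of_real (-(M - 1) / M) * z))"
    by (rule subord_AB[OF hp p0 B1 h])
  then show "f \<in> Sstar_AB 1 (-(M - 1) / M)"
    unfolding Sstar_AB_def Sstar_def using fA fnz p_def by auto
qed

theorem theorem3p1:
  shows "(\<forall>\<alpha>::real. 0 \<le> \<alpha> \<and> \<alpha> \<le> 1/4 \<longrightarrow> Scar \<subseteq> Sstar_ord \<alpha>)
   \<and> (\<forall>\<beta>::real. (2/pi) * arctan (3 * sqrt (3/5)) \<le> \<beta> \<and> \<beta> \<le> 1 \<longrightarrow> Scar \<subseteq> SSstar \<beta>)
   \<and> (\<forall>k::real. k \<ge> 5/3 \<longrightarrow> kSstar k \<subseteq> Scar)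
   \<and> (\<forall>\<alpha>::real. (exp 1 - 2) / (2 * (exp 1 - 1)) \<le> \<alpha> \<and> \<alpha> < 1 \<longrightarrow> Sstar_e \<alpha> \<subseteq> Scar)
   \<and> (\<forall>\<alpha>::real. 1/2 \<le> \<alpha> \<and> \<alpha> < 1 \<longrightarrow> Sstar_L \<alpha> \<subseteq> Scar)
   \<and> (\<forall>c::real. 0 < c \<and> c \<le> 3/4 \<longrightarrow> Sstar_sqrt c \<subseteq> Scar)
   \<and> (\<forall>A B::real. -1 < B \<and> B < A \<and> A \<le> 1 \<and>
        ((1 - B^2 < 2 * (1 - A*B) \<and> 2 * (1 - A*B) \<le> 3 * (1 - B^2) \<and> 2*A \<le> 1 + B) \<or>
         (3 * (1 - B^2) \<le> 2 * (1 - A*B) \<and> 2 * (1 - A*B) < 5 * (1 - B^2) \<and> 2*A \<le> 3 + 5*B))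
        \<longrightarrow> Sstar_AB A B \<subseteq> Scar)
   \<and> (\<forall>M::real. M \<ge> (3 + sqrt 5) / 4 \<longrightarrow> Scar \<subseteq> Sstar_AB 1 (-(M - 1) / M))"
  using part1 part2 part3 part4 part5 part6 part7 part8 by blast

end
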